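(* Let $d\ge 1$ and $k\ge 0$ be integers and let $f\in L^1(\mathbb{R}^d;1+|x|^{k+1})$. Then there exists a family of functions $\{F_\alpha\}_{|\alpha|=k+1}$ with $F_\alpha\in L^1(\mathbb{R}^d)$ such that, in the sense of tempered distributions, $$ f=\sum_{|\alpha|\le k}\frac{(-1)^{|\alpha|}}{\alpha!}\Big(\int_{\mathbb{R}^d} x^\alpha f(x)\,dx\Big)D^\alpha\delta+\sum_{|\alpha|=k+1}D^\alpha F_\alpha, $$ and moreover for every multi-index $\alpha$ with $|\alpha|=k+1$, $$\|F_\alpha\|_{L^1}\le \frac{\|x^\alpha f(x)\|_{L^1}}{\alpha!}.$$ (One may take $F_\alpha(x)=(-1)^{|\alpha|}\int_0^1 (k+1)\frac{(1-s)^k}{s^{d+|\alpha|}}\frac{x^\alpha}{\alpha!}f(x/s)\,ds$.)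
   Context: $L^1(\mathbb{R}^d;1+|x|^{m})$ denotes the set of measurable functions $f$ with $\int_{\mathbb{R}^d}|f(x)|(1+|x|^m)\,dx<\infty$. For a multi-index $\alpha=(\alpha_1,\dots,\alpha_d)\in\mathbb{Z}_{\ge0}^d$: $|\alpha|=\alpha_1+\cdots+\alpha_d$, $\alpha!=\alpha_1!\cdots\alpha_d!$, $x^\alpha=x_1^{\alpha_1}\cdots x_d^{\alpha_d}$, $D^\alpha=\partial_{x_1}^{\alpha_1}\cdots\partial_{x_d}^{\alpha_d}$. $\delta$ is the Dirac mass at the origin. *)

theory Defs
  imports "HOL-Analysis.Analysis"
begin

text \<open>Euclidean space R^d is modelled as real^'n with 'n a finite (linearly ordered) index type,
  d = CARD('n). Multi-indices are functions 'n => nat.\<close>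

definition mi_abs :: "('n::finite \<Rightarrow> nat) \<Rightarrow> nat" where
  "mi_abs \<alpha> = (\<Sum>i\<in>UNIV. \<alpha> i)"

definition mi_fact :: "('n::finite \<Rightarrow> nat) \<Rightarrow> real" where
  "mi_fact \<alpha> = (\<Prod>i\<in>UNIV. fact (\<alpha> i))"

definition mi_pow :: "real^'n::finite \<Rightarrow> ('n \<Rightarrow> nat) \<Rightarrow> real" where
  "mi_pow x \<alpha> = (\<Prod>i\<in>UNIV. (x $ i) ^ (\<alpha> i))"

definition partial_dir :: "'n::finite \<Rightarrow> (real^'n \<Rightarrow> real) \<Rightarrow> (real^'n \<Rightarrow> real)" where
  "partial_dir i g = (\<lambda>x. deriv (\<lambda>t. g (x + t *\<^sub>R axis i 1)) 0)"

definition Dmi :: "(('n::{finite,linorder}) \<Rightarrow> nat) \<Rightarrow> (real^('n::{finite,linorder}) \<Rightarrow> real) \<Rightarrow> (real^('n::{finite,linorder}) \<Rightarrow> real)" where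
  "Dmi \<alpha> g = foldr (\<lambda>i h. (partial_dir i ^^ \<alpha> i) h) (sorted_list_of_set UNIV) g"

definition schwartz :: "(real^('n::{finite,linorder}) \<Rightarrow> real) \<Rightarrow> bool" where
  "schwartz \<phi> \<longleftrightarrow>
     (\<forall>\<alpha> i x. (\<lambda>t. Dmi \<alpha> \<phi> (x + t *\<^sub>R axis i 1)) differentiable (at 0)) \<and>
     (\<forall>\<alpha>. continuous_on UNIV (Dmi \<alpha> \<phi>)) \<and>
     (\<forall>\<alpha> (N::nat). bounded (range (\<lambda>x. (1 + norm x) ^ N * Dmi \<alpha> \<phi> x)))"

type_synonym 'n distr = "(real^'n \<Rightarrow> real) \<Rightarrow> real"

definition regular_distr :: "(real^'n::finite \<Rightarrow> real) \<Rightarrow> 'n distr" where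
  "regular_distr f = (\<lambda>\<phi>. integral\<^sup>L lborel (\<lambda>x. f x * \<phi> x))"

definition dirac :: "'n::finite distr" where
  "dirac = (\<lambda>\<phi>. \<phi> 0)"

definition distr_D :: "(('n::{finite,linorder}) \<Rightarrow> nat) \<Rightarrow> ('n::{finite,linorder}) distr \<Rightarrow> ('n::{finite,linorder}) distr" where
  "distr_D \<alpha> T = (\<lambda>\<phi>. (-1) ^ mi_abs \<alpha> * T (Dmi \<alpha> \<phi>))"

end

theory Submission
  imports Defs
begin

definition inc :: "('n \<Rightarrow> nat) \<Rightarrow> 'n \<Rightarrow> ('n \<Rightarrow> nat)" where
  "inc \<alpha> j = \<alpha>(j := Suc (\<alpha> j))"

lemma mi_abs_inc: "mi_abs (inc \<alpha> j) = Suc (mi_abs (\<alpha>::'n::finite\<Rightarrow>nat))"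
proof -
  have "(\<Sum>i\<in>UNIV. inc \<alpha> j i) = (\<Sum>i\<in>UNIV. \<alpha> i + (if i = j then 1 else 0))"
    by (rule sum.cong) (auto simp: inc_def)
  also have "\<dots> = (\<Sum>i\<in>UNIV. \<alpha> i) + 1" by (simp add: sum.distrib)
  finally show ?thesis by (simp add: mi_abs_def)
qed

lemma mi_fact_inc: "mi_fact (inc \<alpha> j) = mi_fact (\<alpha>::'n::finite\<Rightarrow>nat) * (Suc (\<alpha> j))"
proof -
  have "(\<Prod>i\<in>UNIV. (fact (inc \<alpha> j i)::real)) = (\<Prod>i\<in>UNIV. fact (\<alpha> i) * (if i = j then real (Suc (\<alpha> j)) else 1))"
    by (rule prod.cong) (auto simp: inc_def)
  also have "\<dots> = (\<Prod>i\<in>UNIV. fact (\<alpha> i)) * real (Suc (\<alpha> j))"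
    by (simp add: prod.distrib)
  finally show ?thesis by (simp add: mi_fact_def)
qed

lemma mi_pow_inc: "mi_pow x (inc \<alpha> j) = mi_pow x \<alpha> * x $ j"
proof -
  have "(\<Prod>i\<in>UNIV. (x $ i) ^ (inc \<alpha> j i)) = (\<Prod>i\<in>UNIV. (x $ i) ^ (\<alpha> i) * (if i = j then x $ j else 1))"
    by (rule prod.cong) (auto simp: inc_def)
  also have "\<dots> = (\<Prod>i\<in>UNIV. (x $ i) ^ (\<alpha> i)) * x $ j"
    by (simp add: prod.distrib)
  finally show ?thesis by (simp add: mi_pow_def)
qed

lemma mi_fact_pos: "mi_fact \<alpha> > 0"
  by (simp add: mi_fact_def prod_pos)

lemma finite_mi_le: "finite {\<alpha>::'n::finite\<Rightarrow>nat. mi_abs \<alpha> \<le> m}"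
proof -
  have "{\<alpha>::'n\<Rightarrow>nat. mi_abs \<alpha> \<le> m} \<subseteq> PiE UNIV (\<lambda>_. {..m})"
  proof
    fix \<alpha> :: "'n \<Rightarrow> nat" assume "\<alpha> \<in> {\<alpha>. mi_abs \<alpha> \<le> m}"
    then have "\<alpha> i \<le> m" for i
      using member_le_sum[of i UNIV \<alpha>] by (auto simp: mi_abs_def)
    then show "\<alpha> \<in> PiE UNIV (\<lambda>_. {..m})" by (auto simp: PiE_def extensional_def)
  qed
  moreover have "finite (PiE (UNIV::'n set) (\<lambda>_. {..m}))" by (rule finite_PiE) auto
  ultimately show ?thesis by (rule finite_subset)
qed

lemma finite_mi_eq: "finite {\<alpha>::'n::finite\<Rightarrow>nat. mi_abs \<alpha> = m}"
  by (rule finite_subset[OF _ finite_mi_le[of m]]) auto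

lemma mi_pow_scale: "mi_pow (c *\<^sub>R x) \<alpha> = c ^ mi_abs \<alpha> * mi_pow x \<alpha>"
  by (simp add: mi_pow_def mi_abs_def power_mult_distrib prod.distrib power_sum)

lemma mi_abs_zero[simp]: "mi_abs (\<lambda>_. 0) = 0" by (simp add: mi_abs_def)
lemma mi_abs_eq0: "mi_abs (\<alpha>::'n::finite\<Rightarrow>nat) = 0 \<longleftrightarrow> \<alpha> = (\<lambda>_. 0)"
  by (auto simp: mi_abs_def fun_eq_iff)

lemma multinomial_step:
  fixes c :: "('n::finite \<Rightarrow> nat) \<Rightarrow> real"
  shows "(\<Sum>\<alpha>\<in>{\<alpha>. mi_abs \<alpha> = m}. (fact m / mi_fact \<alpha>) * mi_pow x \<alpha> * (\<Sum>j\<in>UNIV. x $ j * c (inc \<alpha> j)))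
       = (\<Sum>\<beta>\<in>{\<beta>. mi_abs \<beta> = Suc m}. (fact (Suc m) / mi_fact \<beta>) * mi_pow x \<beta> * c \<beta>)"
proof -
  let ?A = "{\<alpha>::'n\<Rightarrow>nat. mi_abs \<alpha> = m}" and ?B = "{\<beta>::'n\<Rightarrow>nat. mi_abs \<beta> = Suc m}"
  have "(\<Sum>\<alpha>\<in>?A. (fact m / mi_fact \<alpha>) * mi_pow x \<alpha> * (\<Sum>j\<in>UNIV. x $ j * c (inc \<alpha> j)))
      = (\<Sum>j\<in>UNIV. \<Sum>\<alpha>\<in>?A. (fact m / mi_fact \<alpha>) * mi_pow x (inc \<alpha> j) * c (inc \<alpha> j))"
    by (subst sum.swap) (simp add: sum_distrib_left mi_pow_inc mult_ac)
  also have "\<dots> = (\<Sum>j\<in>UNIV. \<Sum>\<beta>\<in>?B. (fact m * \<beta> j / mi_fact \<beta>) * mi_pow x \<beta> * c \<beta>)"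
  proof (rule sum.cong[OF refl])
    fix j
    let ?g = "\<lambda>\<beta>::'n\<Rightarrow>nat. (fact m * \<beta> j / mi_fact \<beta>) * mi_pow x \<beta> * c \<beta>"
    have inj: "inj_on (\<lambda>\<alpha>. inc \<alpha> j) ?A"
      by (rule inj_onI) (auto simp: inc_def fun_eq_iff split: if_splits)
    have img: "(\<lambda>\<alpha>. inc \<alpha> j) ` ?A = {\<beta>\<in>?B. \<beta> j \<noteq> 0}"
    proof (rule subset_antisym)
      show "{\<beta>\<in>?B. \<beta> j \<noteq> 0} \<subseteq> (\<lambda>\<alpha>. inc \<alpha> j) ` ?A"
      proof
        fix \<beta> assume b: "\<beta> \<in> {\<beta>\<in>?B. \<beta> j \<noteq> 0}"
        let ?a = "\<beta>(j := \<beta> j - 1)"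
        have e: "inc ?a j = \<beta>" using b by (auto simp: inc_def fun_eq_iff)
        have "mi_abs ?a = m" using b mi_abs_inc[of ?a j] e by simp
        with e show "\<beta> \<in> (\<lambda>\<alpha>. inc \<alpha> j) ` ?A" by force
      qed
    qed (auto simp: mi_abs_inc[unfolded inc_def] inc_def)
    have "(\<Sum>\<alpha>\<in>?A. (fact m / mi_fact \<alpha>) * mi_pow x (inc \<alpha> j) * c (inc \<alpha> j))
        = (\<Sum>\<alpha>\<in>?A. ?g (inc \<alpha> j))"
    proof (rule sum.cong[OF refl])
      fix \<alpha> :: "'n \<Rightarrow> nat"
      have "inc \<alpha> j j = Suc (\<alpha> j)" by (simp add: inc_def)
      moreover have "mi_fact \<alpha> > 0" by (rule mi_fact_pos)
      moreover have "mi_fact \<alpha> + mi_fact \<alpha> * real (\<alpha> j) > 0"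
        using mi_fact_pos[of \<alpha>] by (simp add: add_pos_nonneg)
      ultimately show "(fact m / mi_fact \<alpha>) * mi_pow x (inc \<alpha> j) * c (inc \<alpha> j) = ?g (inc \<alpha> j)"
        by (simp add: mi_fact_inc field_simps)
    qed
    also have "\<dots> = (\<Sum>\<beta>\<in>{\<beta>\<in>?B. \<beta> j \<noteq> 0}. ?g \<beta>)"
      using sum.reindex[OF inj, of ?g] img by simp
    also have "\<dots> = (\<Sum>\<beta>\<in>?B. ?g \<beta>)"
      by (rule sum.mono_neutral_left) (auto simp: finite_mi_eq)
    finally show "(\<Sum>\<alpha>\<in>?A. (fact m / mi_fact \<alpha>) * mi_pow x (inc \<alpha> j) * c (inc \<alpha> j)) = (\<Sum>\<beta>\<in>?B. ?g \<beta>)" .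
  qed
  also have "\<dots> = (\<Sum>\<beta>\<in>?B. (fact m * (\<Sum>j\<in>UNIV. real (\<beta> j)) / mi_fact \<beta>) * mi_pow x \<beta> * c \<beta>)"
    by (subst sum.swap) (simp add: sum_distrib_left sum_distrib_right sum_divide_distrib)
  also have "\<dots> = (\<Sum>\<beta>\<in>?B. (fact (Suc m) / mi_fact \<beta>) * mi_pow x \<beta> * c \<beta>)"
  proof (rule sum.cong[OF refl])
    fix \<beta> assume "\<beta> \<in> ?B"
    then have "(\<Sum>j\<in>UNIV. real (\<beta> j)) = real (Suc m)"
      by (simp add: mi_abs_def flip: of_nat_sum)
    then show "(fact m * (\<Sum>j\<in>UNIV. real (\<beta> j)) / mi_fact \<beta>) * mi_pow x \<beta> * c \<beta>
      = (fact (Suc m) / mi_fact \<beta>) * mi_pow x \<beta> * c \<beta>" by (simp add: mult_ac)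
  qed
  finally show ?thesis .
qed



lemma foldr_pow_cong:
  "(\<And>l. l \<in> set xs \<Longrightarrow> \<alpha> l = \<beta> l) \<Longrightarrow>
   foldr (\<lambda>i h. (P i ^^ \<alpha> i) h) xs g = foldr (\<lambda>i h. (P i ^^ \<beta> i) h) xs g"
  by (induction xs) auto

lemma foldr_pow_zero: "foldr (\<lambda>i h. (P i ^^ (0::nat)) h) xs g = g"
  by (induction xs) auto

lemma foldr_inc:
  fixes xs :: "'a::linorder list"
  assumes "sorted xs" "distinct xs" "j \<in> set xs" "\<forall>l\<in>set xs. l < j \<longrightarrow> \<alpha> l = 0"
  shows "foldr (\<lambda>i h. (P i ^^ inc \<alpha> j i) h) xs g = P j (foldr (\<lambda>i h. (P i ^^ \<alpha> i) h) xs g)"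
  using assms
proof (induction xs)
  case Nil then show ?case by simp
next
  case (Cons a xs)
  show ?case
  proof (cases "a = j")
    case True
    have "foldr (\<lambda>i h. (P i ^^ inc \<alpha> j i) h) xs g = foldr (\<lambda>i h. (P i ^^ \<alpha> i) h) xs g"
      using Cons.prems True by (intro foldr_pow_cong) (auto simp: inc_def)
    then show ?thesis using True by (simp add: inc_def)
  next
    case False
    then have "a < j" using Cons.prems by auto
    then have "\<alpha> a = 0" "inc \<alpha> j a = 0" using Cons.prems False by (auto simp: inc_def)
    moreover have "foldr (\<lambda>i h. (P i ^^ inc \<alpha> j i) h) xs g = P j (foldr (\<lambda>i h. (P i ^^ \<alpha> i) h) xs g)"
      using Cons.prems False by (intro Cons.IH) auto
    ultimately show ?thesis by simp
  qed
qed

lemma Dmi_inc: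
  assumes "\<forall>l. \<alpha> l \<noteq> 0 \<longrightarrow> j \<le> l"
  shows "Dmi (inc \<alpha> j) g = partial_dir j (Dmi \<alpha> g)"
  unfolding Dmi_def
proof (rule foldr_inc)
  show "\<forall>l\<in>set (sorted_list_of_set UNIV). l < j \<longrightarrow> \<alpha> l = 0"
    using assms leD by blast
qed auto

lemma Dmi_zero: "Dmi (\<lambda>_. 0) g = g"
  unfolding Dmi_def by (rule foldr_pow_zero)



lemma mvt0:
  fixes f :: "real \<Rightarrow> real"
  assumes "\<And>t. (f has_real_derivative f' t) (at t)"
  shows "\<exists>z. \<bar>z\<bar> \<le> \<bar>b\<bar> \<and> f b - f 0 = b * f' z"
proof (cases "b = 0")
  case True then show ?thesis by (intro exI[of _ 0]) simp
next
  case False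
  show ?thesis
  proof (cases "b > 0")
    case True
    from MVT2[OF True assms] obtain z where "0 < z" "z < b" "f b - f 0 = (b - 0) * f' z" by blast
    then show ?thesis by (intro exI[of _ z]) auto
  next
    case nb: False
    with False have "b < 0" by simp
    from MVT2[OF this assms] obtain z where "b < z" "z < 0" "f 0 - f b = (0 - b) * f' z" by blast
    then show ?thesis by (intro exI[of _ z]) (auto simp: algebra_simps)
  qed
qed

lemma pd_deriv:
  assumes "(\<lambda>t. g (x + t *\<^sub>R axis i 1)) differentiable (at 0)"
  shows "((\<lambda>t. g (x + t *\<^sub>R axis i 1)) has_real_derivative partial_dir i g x) (at 0)"
  using assms by (simp add: partial_dir_def DERIV_deriv_iff_real_differentiable)

lemma deriv_shift_dir:
  fixes v :: "'a::real_normed_vector"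
  assumes "\<And>z. ((\<lambda>t. g (z + t *\<^sub>R v)) has_real_derivative p z) (at 0)"
  shows "((\<lambda>t. g (x + t *\<^sub>R v)) has_real_derivative p (x + s *\<^sub>R v)) (at s)"
proof -
  have "((\<lambda>t. g ((x + s *\<^sub>R v) + t *\<^sub>R v)) has_real_derivative p (x + s *\<^sub>R v)) (at 0)"
    by (rule assms)
  moreover have "(\<lambda>t. g ((x + s *\<^sub>R v) + t *\<^sub>R v)) = (\<lambda>t. (\<lambda>t. g (x + t *\<^sub>R v)) (t + s))"
    by (rule ext, rule arg_cong[where f=g]) (simp add: scaleR_add_left add_ac)
  ultimately show ?thesis
    using DERIV_shift[of "\<lambda>t. g (x + t *\<^sub>R v)" "p (x + s *\<^sub>R v)" 0 s] by simp
qed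

lemma pd_deriv_at:
  assumes "\<forall>z. (\<lambda>t. g (z + t *\<^sub>R axis i 1)) differentiable (at 0)"
  shows "((\<lambda>t. g (x + t *\<^sub>R axis i 1)) has_real_derivative partial_dir i g (x + s *\<^sub>R axis i 1)) (at s)"
  by (rule deriv_shift_dir) (use assms pd_deriv in blast)

lemma norm_two_axis: "norm (a *\<^sub>R axis i (1::real) + b *\<^sub>R axis j 1 :: real^'n) \<le> \<bar>a\<bar> + \<bar>b\<bar>"
  by (rule order_trans[OF norm_triangle_ineq]) simp

lemma schwarz:
  fixes g :: "real^'n::finite \<Rightarrow> real"
  assumes di: "\<forall>z. (\<lambda>t. g (z + t *\<^sub>R axis i 1)) differentiable (at 0)"
    and dj: "\<forall>z. (\<lambda>t. g (z + t *\<^sub>R axis j 1)) differentiable (at 0)"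
    and dij: "\<forall>z. (\<lambda>t. partial_dir j g (z + t *\<^sub>R axis i 1)) differentiable (at 0)"
    and cont: "continuous_on UNIV (partial_dir i (partial_dir j g))"
  shows "((\<lambda>v. partial_dir i g (x + v *\<^sub>R axis j 1)) has_real_derivative partial_dir i (partial_dir j g) x) (at 0)"
proof -
  define ei :: "real^'n" where "ei = axis i 1"
  define ej :: "real^'n" where "ej = axis j 1"
  define pp where "pp = partial_dir i (partial_dir j g)"
  define L where "L = pp x"
  define \<Delta> where "\<Delta> u v = g (x + u *\<^sub>R ei + v *\<^sub>R ej) - g (x + u *\<^sub>R ei) - g (x + v *\<^sub>R ej) + g x" for u v
  have key: "\<exists>\<xi> \<eta>. \<bar>\<xi>\<bar> \<le> \<bar>u\<bar> \<and> \<bar>\<eta>\<bar> \<le> \<bar>v\<bar> \<and> \<Delta> u v = u * v * pp (x + \<xi> *\<^sub>R ei + \<eta> *\<^sub>R ej)" for u v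
  proof -
    define A where "A w = g (x + u *\<^sub>R ei + w *\<^sub>R ej) - g (x + w *\<^sub>R ej)" for w
    define A' where "A' w = partial_dir j g (x + u *\<^sub>R ei + w *\<^sub>R ej) - partial_dir j g (x + w *\<^sub>R ej)" for w
    have "(A has_real_derivative A' w) (at w)" for w
      unfolding A_def A'_def ej_def
      by (intro derivative_intros pd_deriv_at[OF dj, of "x + u *\<^sub>R ei", of w]
            pd_deriv_at[OF dj, of x w])
    from mvt0[of A A', OF this] obtain \<eta> where \<eta>: "\<bar>\<eta>\<bar> \<le> \<bar>v\<bar>" "A v - A 0 = v * A' \<eta>" by blast
    define B where "B w = partial_dir j g ((x + \<eta> *\<^sub>R ej) + w *\<^sub>R ei)" for w
    have "(B has_real_derivative pp ((x + \<eta> *\<^sub>R ej) + w *\<^sub>R ei)) (at w)" for w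
      unfolding B_def ei_def pp_def by (rule pd_deriv_at[OF dij])
    from mvt0[of B, OF this] obtain \<xi> where \<xi>: "\<bar>\<xi>\<bar> \<le> \<bar>u\<bar>" "B u - B 0 = u * pp ((x + \<eta> *\<^sub>R ej) + \<xi> *\<^sub>R ei)" by blast
    have "A' \<eta> = B u - B 0" unfolding A'_def B_def by (simp add: algebra_simps)
    moreover have "\<Delta> u v = A v - A 0" unfolding \<Delta>_def A_def by simp
    ultimately have "\<Delta> u v = u * v * pp (x + \<xi> *\<^sub>R ei + \<eta> *\<^sub>R ej)"
      using \<eta> \<xi> by (simp add: algebra_simps)
    with \<eta> \<xi> show ?thesis by blast
  qed
  have di': "((\<lambda>u. g (z + u *\<^sub>R ei)) has_real_derivative partial_dir i g z) (at 0)" for z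
    unfolding ei_def using di pd_deriv by blast
  show ?thesis
    unfolding has_field_derivative_iff
  proof (rule LIM_I)
    fix r :: real assume r: "r > 0"
    have "isCont pp x" using cont unfolding pp_def by (simp add: continuous_on_eq_continuous_at)
    then obtain \<delta> where \<delta>: "\<delta> > 0" "\<And>z. dist z x < \<delta> \<Longrightarrow> dist (pp z) (pp x) < r / 2"
      using r unfolding continuous_at_eps_delta by (metis half_gt_zero)
    show "\<exists>s>0. \<forall>v. v \<noteq> 0 \<and> norm (v - 0) < s \<longrightarrow>
      norm ((partial_dir i g (x + v *\<^sub>R axis j 1) - partial_dir i g (x + 0 *\<^sub>R axis j 1)) / (v - 0) - partial_dir i (partial_dir j g) x) < r"
    proof (intro exI[of _ "\<delta>/2"] conjI allI impI)
      show "\<delta> / 2 > 0" using \<delta> by simp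
      fix v :: real assume v: "v \<noteq> 0 \<and> norm (v - 0) < \<delta> / 2"
      define q where "q = (partial_dir i g (x + v *\<^sub>R ej) - partial_dir i g x) / v"
      have t1: "((\<lambda>u. (g ((x + v *\<^sub>R ej) + u *\<^sub>R ei) - g ((x + v *\<^sub>R ej) + 0 *\<^sub>R ei)) / (u - 0)) \<longlongrightarrow> partial_dir i g (x + v *\<^sub>R ej)) (at 0)"
        using di'[of "x + v *\<^sub>R ej"] unfolding has_field_derivative_iff .
      have t2: "((\<lambda>u. (g (x + u *\<^sub>R ei) - g (x + 0 *\<^sub>R ei)) / (u - 0)) \<longlongrightarrow> partial_dir i g x) (at 0)"
        using di'[of x] unfolding has_field_derivative_iff by simp
      have t: "((\<lambda>u. \<Delta> u v / (u * v) - pp x) \<longlongrightarrow> q - pp x) (at 0)"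
      proof -
        have "((\<lambda>u. ((g ((x + v *\<^sub>R ej) + u *\<^sub>R ei) - g ((x + v *\<^sub>R ej) + 0 *\<^sub>R ei)) / (u - 0)
             - (g (x + u *\<^sub>R ei) - g (x + 0 *\<^sub>R ei)) / (u - 0)) / v - pp x) \<longlongrightarrow> q - pp x) (at 0)"
          unfolding q_def by (intro tendsto_intros t1 t2) (use v in auto)
        moreover have "eventually (\<lambda>u. ((g ((x + v *\<^sub>R ej) + u *\<^sub>R ei) - g ((x + v *\<^sub>R ej) + 0 *\<^sub>R ei)) / (u - 0)
             - (g (x + u *\<^sub>R ei) - g (x + 0 *\<^sub>R ei)) / (u - 0)) / v - pp x = \<Delta> u v / (u * v) - pp x) (at 0)"
          unfolding eventually_at
          using v by (intro exI[of _ 1]) (auto simp: \<Delta>_def field_simps)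
        ultimately show ?thesis by (rule Lim_transform_eventually)
      qed
      have ev: "eventually (\<lambda>u. norm (\<Delta> u v / (u * v) - pp x) \<le> r / 2) (at 0)"
        unfolding eventually_at
      proof (intro exI[of _ "\<delta>/2"] conjI ballI impI)
        show "\<delta> / 2 > 0" using \<delta> by simp
        fix u :: real assume u: "u \<noteq> 0 \<and> dist u 0 < \<delta> / 2"
        obtain \<xi> \<eta> where k: "\<bar>\<xi>\<bar> \<le> \<bar>u\<bar>" "\<bar>\<eta>\<bar> \<le> \<bar>v\<bar>" "\<Delta> u v = u * v * pp (x + \<xi> *\<^sub>R ei + \<eta> *\<^sub>R ej)"
          using key by blast
        have "dist (x + \<xi> *\<^sub>R ei + \<eta> *\<^sub>R ej) x = norm (\<xi> *\<^sub>R ei + \<eta> *\<^sub>R ej)"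
          by (simp add: dist_norm)
        also have "\<dots> \<le> \<bar>\<xi>\<bar> + \<bar>\<eta>\<bar>" unfolding ei_def ej_def by (rule norm_two_axis)
        also have "\<dots> < \<delta>" using k u v by simp
        finally have "dist (pp (x + \<xi> *\<^sub>R ei + \<eta> *\<^sub>R ej)) (pp x) < r / 2" by (rule \<delta>)
        moreover have "\<Delta> u v / (u * v) = pp (x + \<xi> *\<^sub>R ei + \<eta> *\<^sub>R ej)"
          using k u v by simp
        ultimately show "norm (\<Delta> u v / (u * v) - pp x) \<le> r / 2" by (simp add: dist_norm)
      qed
      have "norm (q - pp x) \<le> r / 2"
        by (rule Lim_norm_ubound[OF _ t ev]) simp
      then show "norm ((partial_dir i g (x + v *\<^sub>R axis j 1) - partial_dir i g (x + 0 *\<^sub>R axis j 1)) / (v - 0) - partial_dir i (partial_dir j g) x) < r"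
        using r by (simp add: q_def ej_def pp_def)
    qed
  qed
qed



definition proj :: "'n::finite set \<Rightarrow> real^'n \<Rightarrow> real^'n" where
  "proj S h = (\<chi> i. if i \<in> S then h $ i else 0)"

lemma proj_UNIV[simp]: "proj UNIV h = h" by (simp add: proj_def vec_eq_iff)

lemma norm_proj_le: "norm (proj S h + z *\<^sub>R axis j 1) \<le> norm h" if "\<bar>z\<bar> \<le> \<bar>h $ j\<bar>" "j \<notin> S"
  by (rule norm_le_componentwise_cart) (use that in \<open>auto simp: proj_def axis_def\<close>)

lemma frechet_partials:
  fixes g :: "real^'n::finite \<Rightarrow> real"
  assumes d: "\<And>i z. ((\<lambda>t. g (z + t *\<^sub>R axis i 1)) has_real_derivative p i z) (at 0)"
    and c: "\<And>i. continuous_on UNIV (p i)"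
  shows "(g has_derivative (\<lambda>h. \<Sum>i\<in>UNIV. h $ i * p i y)) (at y)"
proof -
  have main: "\<forall>e>0. \<exists>d>0. \<forall>h. norm h < d \<longrightarrow>
     \<bar>g (y + proj S h) - g y - (\<Sum>i\<in>S. h $ i * p i y)\<bar> \<le> e * norm h" if "finite S" for S
    using that
  proof (induction S rule: finite_induct)
    case empty
    show ?case by (intro allI impI exI[of _ 1]) (auto simp: proj_def zero_vec_def[symmetric])
  next
    case (insert j S)
    show ?case
    proof (intro allI impI)
      fix e :: real assume e: "e > 0"
      obtain d1 where d1: "d1 > 0" "\<And>h. norm h < d1 \<Longrightarrow>
          \<bar>g (y + proj S h) - g y - (\<Sum>i\<in>S. h $ i * p i y)\<bar> \<le> e / 2 * norm h"
        using insert(3) e by (meson half_gt_zero)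
      have "isCont (p j) y" using c by (simp add: continuous_on_eq_continuous_at)
      then obtain d2 where d2: "d2 > 0" "\<And>z. dist z y < d2 \<Longrightarrow> dist (p j z) (p j y) < e / 2"
        using e unfolding continuous_at_eps_delta by (metis half_gt_zero)
      show "\<exists>d>0. \<forall>h. norm h < d \<longrightarrow>
          \<bar>g (y + proj (insert j S) h) - g y - (\<Sum>i\<in>insert j S. h $ i * p i y)\<bar> \<le> e * norm h"
      proof (intro exI[of _ "min d1 d2"] conjI allI impI)
        show "min d1 d2 > 0" using d1 d2 by simp
        fix h :: "real^'n" assume h: "norm h < min d1 d2"
        define z0 where "z0 = y + proj S h"
        have der: "((\<lambda>t. g (z0 + t *\<^sub>R axis j 1)) has_real_derivative p j (z0 + t *\<^sub>R axis j 1)) (at t)" for t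
          by (rule deriv_shift_dir) (rule d)
        obtain \<zeta> where \<zeta>: "\<bar>\<zeta>\<bar> \<le> \<bar>h $ j\<bar>"
          "g (z0 + (h $ j) *\<^sub>R axis j 1) - g (z0 + 0 *\<^sub>R axis j 1) = h $ j * p j (z0 + \<zeta> *\<^sub>R axis j 1)"
          using mvt0[of "\<lambda>t. g (z0 + t *\<^sub>R axis j 1)", OF der] by blast
        have pj: "y + proj (insert j S) h = z0 + (h $ j) *\<^sub>R axis j 1"
          using insert(2) by (auto simp: z0_def proj_def vec_eq_iff axis_def)
        have "dist (z0 + \<zeta> *\<^sub>R axis j 1) y = norm (proj S h + \<zeta> *\<^sub>R axis j 1)"
          by (simp add: z0_def dist_norm)
        also have "\<dots> \<le> norm h" by (rule norm_proj_le) (use \<zeta> insert(2) in auto)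
        finally have "dist (z0 + \<zeta> *\<^sub>R axis j 1) y < d2" using h by simp
        then have cl: "\<bar>p j (z0 + \<zeta> *\<^sub>R axis j 1) - p j y\<bar> \<le> e / 2"
          using d2 by (simp add: dist_real_def less_imp_le)
        have hj: "\<bar>h $ j\<bar> \<le> norm h" by (rule component_le_norm_cart)
        have "\<bar>h $ j * p j (z0 + \<zeta> *\<^sub>R axis j 1) - h $ j * p j y\<bar> = \<bar>h $ j\<bar> * \<bar>p j (z0 + \<zeta> *\<^sub>R axis j 1) - p j y\<bar>"
          by (simp add: abs_mult[symmetric] algebra_simps)
        also have "\<dots> \<le> norm h * (e / 2)"
          using cl hj by (intro mult_mono) auto
        finally have A: "\<bar>h $ j * p j (z0 + \<zeta> *\<^sub>R axis j 1) - h $ j * p j y\<bar> \<le> e / 2 * norm h"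
          by (simp add: mult.commute)
        have B: "\<bar>g z0 - g y - (\<Sum>i\<in>S. h $ i * p i y)\<bar> \<le> e / 2 * norm h"
          using d1 h unfolding z0_def by simp
        have "g (y + proj (insert j S) h) - g y - (\<Sum>i\<in>insert j S. h $ i * p i y)
           = (h $ j * p j (z0 + \<zeta> *\<^sub>R axis j 1) - h $ j * p j y) + (g z0 - g y - (\<Sum>i\<in>S. h $ i * p i y))"
          using \<zeta> pj insert(1,2) by simp
        then show "\<bar>g (y + proj (insert j S) h) - g y - (\<Sum>i\<in>insert j S. h $ i * p i y)\<bar> \<le> e * norm h"
          using A B by linarith
      qed
    qed
  qed
  have bl: "bounded_linear (\<lambda>h::real^'n. \<Sum>i\<in>UNIV. h $ i * p i y)"
    by (intro bounded_linear_sum bounded_linear_compose[OF bounded_linear_mult_left] bounded_linear_vec_nth)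
  show ?thesis
    unfolding has_derivative_at_alt
  proof (intro conjI bl allI impI)
    fix e :: real assume "e > 0"
    from main[of UNIV, OF finite, rule_format, OF this] obtain d where d: "d > 0" "\<And>h. norm h < d \<Longrightarrow>
      \<bar>g (y + proj UNIV h) - g y - (\<Sum>i\<in>UNIV. h $ i * p i y)\<bar> \<le> e * norm h" by blast
    show "\<exists>d>0. \<forall>ya. norm (ya - y) < d \<longrightarrow> norm (g ya - g y - (\<Sum>i\<in>UNIV. (ya - y) $ i * p i y)) \<le> e * norm (ya - y)"
    proof (intro exI[of _ d] conjI allI impI)
      fix ya assume "norm (ya - y) < d"
      from d(2)[OF this] show "norm (g ya - g y - (\<Sum>i\<in>UNIV. (ya - y) $ i * p i y)) \<le> e * norm (ya - y)"
        by simp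
    qed (rule d)
  qed
qed



lemma schwartz_dd: "schwartz \<phi> \<Longrightarrow> (\<lambda>t. Dmi \<alpha> \<phi> (x + t *\<^sub>R axis i 1)) differentiable (at 0)"
  by (simp add: schwartz_def)
lemma schwartz_cont: "schwartz \<phi> \<Longrightarrow> continuous_on UNIV (Dmi \<alpha> \<phi>)"
  by (simp add: schwartz_def)

lemma pd_Dmi:
  fixes \<phi> :: "real^'n::{finite,linorder} \<Rightarrow> real"
  assumes S: "schwartz \<phi>"
  shows "partial_dir j (Dmi \<beta> \<phi>) = Dmi (inc \<beta> j) \<phi>"
proof (induction "mi_abs \<beta>" arbitrary: \<beta> j rule: less_induct)
  case less
  show ?case
  proof (cases "\<forall>l. \<beta> l \<noteq> 0 \<longrightarrow> j \<le> l")
    case True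
    then show ?thesis by (simp add: Dmi_inc)
  next
    case False
    then obtain l0 where l0: "\<beta> l0 \<noteq> 0" "l0 < j" by (auto simp: not_le)
    define i where "i = Min {l. \<beta> l \<noteq> 0}"
    have ne: "{l. \<beta> l \<noteq> 0} \<noteq> {}" using l0 by auto
    have bi: "\<beta> i \<noteq> 0" unfolding i_def using Min_in[OF finite ne] by simp
    have imin: "\<forall>l. \<beta> l \<noteq> 0 \<longrightarrow> i \<le> l" unfolding i_def by (auto intro: Min_le)
    have ij: "i < j" using imin l0 le_less_trans by blast
    define \<gamma> where "\<gamma> = \<beta>(i := \<beta> i - 1)"
    have g\<beta>: "inc \<gamma> i = \<beta>" using bi by (auto simp: \<gamma>_def inc_def fun_eq_iff)
    have lt: "mi_abs \<gamma> < mi_abs \<beta>" using mi_abs_inc[of \<gamma> i] g\<beta> by simp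
    have gmin: "\<forall>l. \<gamma> l \<noteq> 0 \<longrightarrow> i \<le> l" using imin by (auto simp: \<gamma>_def split: if_splits)
    define g where "g = Dmi \<gamma> \<phi>"
    have e1: "Dmi \<beta> \<phi> = partial_dir i g"
      unfolding g_def using Dmi_inc[OF gmin, of \<phi>] g\<beta> by simp
    have e2: "partial_dir j g = Dmi (inc \<gamma> j) \<phi>" unfolding g_def by (rule less(1)[OF lt])
    have gmin2: "\<forall>l. inc \<gamma> j l \<noteq> 0 \<longrightarrow> i \<le> l" using gmin ij by (auto simp: inc_def)
    have e3: "Dmi (inc (inc \<gamma> j) i) \<phi> = partial_dir i (partial_dir j g)"
      using Dmi_inc[OF gmin2, of \<phi>] e2 by simp
    have e4: "inc (inc \<gamma> j) i = inc \<beta> j"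
      using ij g\<beta>[symmetric] by (auto simp: inc_def fun_eq_iff)
    have "partial_dir j (partial_dir i g) x = partial_dir i (partial_dir j g) x" for x
    proof -
      have "((\<lambda>v. partial_dir i g (x + v *\<^sub>R axis j 1)) has_real_derivative partial_dir i (partial_dir j g) x) (at 0)"
      proof (rule schwarz)
        show "\<forall>z. (\<lambda>t. g (z + t *\<^sub>R axis i 1)) differentiable at 0"
          unfolding g_def using S by (simp add: schwartz_dd)
        show "\<forall>z. (\<lambda>t. g (z + t *\<^sub>R axis j 1)) differentiable at 0"
          unfolding g_def using S by (simp add: schwartz_dd)
        show "\<forall>z. (\<lambda>t. partial_dir j g (z + t *\<^sub>R axis i 1)) differentiable at 0"
          unfolding e2 using S by (simp add: schwartz_dd)
        show "continuous_on UNIV (partial_dir i (partial_dir j g))"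
          unfolding e3[symmetric] using S by (simp add: schwartz_cont)
      qed
      then show ?thesis unfolding partial_dir_def[of j] by (simp add: DERIV_imp_deriv)
    qed
    then have "partial_dir j (partial_dir i g) = partial_dir i (partial_dir j g)" by (rule ext)
    then show ?thesis using e1 e3 e4 by simp
  qed
qed

lemma Dmi_dir_deriv:
  assumes S: "schwartz \<phi>"
  shows "((\<lambda>t. Dmi \<beta> \<phi> (z + t *\<^sub>R axis i 1)) has_real_derivative Dmi (inc \<beta> i) \<phi> z) (at 0)"
  using pd_deriv[OF schwartz_dd[OF S]] pd_Dmi[OF S] by metis

lemma Dmi_frechet:
  assumes S: "schwartz \<phi>"
  shows "(Dmi \<beta> \<phi> has_derivative (\<lambda>h. \<Sum>i\<in>UNIV. h $ i * Dmi (inc \<beta> i) \<phi> y)) (at y)"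
  by (rule frechet_partials[OF Dmi_dir_deriv[OF S] schwartz_cont[OF S]])

lemma Dmi_ray_deriv:
  assumes S: "schwartz \<phi>"
  shows "((\<lambda>t. Dmi \<beta> \<phi> (t *\<^sub>R x)) has_real_derivative (\<Sum>i\<in>UNIV. x $ i * Dmi (inc \<beta> i) \<phi> (t *\<^sub>R x))) (at t)"
proof -
  have "((\<lambda>t. Dmi \<beta> \<phi> (t *\<^sub>R x)) has_derivative (\<lambda>h. \<Sum>i\<in>UNIV. (h *\<^sub>R x) $ i * Dmi (inc \<beta> i) \<phi> (t *\<^sub>R x))) (at t)"
    by (rule has_derivative_compose[OF _ Dmi_frechet[OF S]]) (auto intro!: derivative_eq_intros)
  then show ?thesis unfolding has_field_derivative_def
    by (rule has_derivative_eq_rhs) (simp add: fun_eq_iff sum_distrib_left mult_ac)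
qed

definition Pm :: "(real^('n::{finite,linorder}) \<Rightarrow> real) \<Rightarrow> nat \<Rightarrow> real^('n::{finite,linorder}) \<Rightarrow> real^('n::{finite,linorder}) \<Rightarrow> real" where
  "Pm \<phi> m x y = (\<Sum>\<alpha>\<in>{\<alpha>. mi_abs \<alpha> = m}. (fact m / mi_fact \<alpha>) * mi_pow x \<alpha> * Dmi \<alpha> \<phi> y)"

lemma Pm_ray_deriv:
  assumes S: "schwartz \<phi>"
  shows "((\<lambda>t. Pm \<phi> m x (t *\<^sub>R x)) has_real_derivative Pm \<phi> (Suc m) x (t *\<^sub>R x)) (at t)"
proof -
  have "((\<lambda>t. Pm \<phi> m x (t *\<^sub>R x)) has_real_derivative
     (\<Sum>\<alpha>\<in>{\<alpha>. mi_abs \<alpha> = m}. (fact m / mi_fact \<alpha>) * mi_pow x \<alpha> * (\<Sum>i\<in>UNIV. x $ i * Dmi (inc \<alpha> i) \<phi> (t *\<^sub>R x)))) (at t)"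
    unfolding Pm_def by (intro DERIV_sum DERIV_cmult Dmi_ray_deriv[OF S])
  then show ?thesis
    unfolding Pm_def by (simp only: multinomial_step[where c="\<lambda>\<beta>. Dmi \<beta> \<phi> (t *\<^sub>R x)"])
qed

lemma mi_abs0_set: "{\<alpha>::'n::finite\<Rightarrow>nat. mi_abs \<alpha> = 0} = {\<lambda>_. 0}"
  by (auto simp: mi_abs_eq0)

lemma Pm_0: "Pm \<phi> 0 x y = \<phi> y"
  by (simp add: Pm_def mi_abs0_set mi_fact_def mi_pow_def Dmi_zero)

lemma taylor_Q_deriv:
  assumes "\<And>m t. (G m has_real_derivative G (Suc m) t) (at t)"
  shows "((\<lambda>s. \<Sum>m\<le>k. G m s * (1 - s) ^ m / fact m) has_real_derivative G (Suc k) s * (1 - s) ^ k / fact k) (at s)"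
proof (induction k)
  case 0
  then show ?case using assms by simp
next
  case (Suc k)
  have p: "((\<lambda>s. (1 - s) ^ Suc k) has_real_derivative - (real (Suc k) * (1 - s) ^ k)) (at s)"
  proof -
    have "((\<lambda>s. 1 - s) has_real_derivative -1) (at s)" by (auto intro!: derivative_eq_intros)
    from DERIV_power[OF this, of "Suc k"] show ?thesis by simp
  qed
  have d: "((\<lambda>s. G (Suc k) s * (1 - s) ^ Suc k / fact (Suc k)) has_real_derivative
        (G (Suc (Suc k)) s * (1 - s) ^ Suc k - G (Suc k) s * (real (Suc k) * (1 - s) ^ k)) / fact (Suc k)) (at s)"
    using DERIV_cdivide[OF DERIV_mult[OF assms[of "Suc k" s] p], where c="fact (Suc k)"]
    by (simp add: algebra_simps del: fact_Suc)
  have "((\<lambda>s. \<Sum>m\<le>Suc k. G m s * (1 - s) ^ m / fact m) has_real_derivative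
     G (Suc k) s * (1 - s) ^ k / fact k + (G (Suc (Suc k)) s * (1 - s) ^ Suc k - G (Suc k) s * (real (Suc k) * (1 - s) ^ k)) / fact (Suc k)) (at s)"
    unfolding sum.atMost_Suc by (rule DERIV_add[OF Suc d])
  moreover have "G (Suc k) s * (1 - s) ^ k / fact k + (G (Suc (Suc k)) s * (1 - s) ^ Suc k - G (Suc k) s * (real (Suc k) * (1 - s) ^ k)) / fact (Suc k)
     = G (Suc (Suc k)) s * (1 - s) ^ Suc k / fact (Suc k)"
  proof -
    have f: "(fact (Suc k) :: real) = real (Suc k) * fact k" by simp
    have "(fact k :: real) > 0" "real (Suc k) > 0" by auto
    then show ?thesis unfolding f by (simp add: field_simps del: of_nat_Suc)
  qed
  ultimately show ?case by simp
qed

lemma taylor_integral: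
  assumes S: "schwartz \<phi>"
  shows "((\<lambda>s. Pm \<phi> (Suc k) x (s *\<^sub>R x) * (1 - s) ^ k / fact k) has_integral
          (\<phi> x - (\<Sum>m\<le>k. Pm \<phi> m x 0 / fact m))) {0..1}"
proof -
  define G where "G m t = Pm \<phi> m x (t *\<^sub>R x)" for m t
  have dG: "(G m has_real_derivative G (Suc m) t) (at t)" for m t
    unfolding G_def using Pm_ray_deriv[OF S] .
  have "((\<lambda>s. G (Suc k) s * (1 - s) ^ k / fact k) has_integral
      ((\<Sum>m\<le>k. G m 1 * (1 - 1) ^ m / fact m) - (\<Sum>m\<le>k. G m 0 * (1 - 0) ^ m / fact m))) {0..1}"
    by (rule fundamental_theorem_of_calculus)
       (auto simp: has_real_derivative_iff_has_vector_derivative[symmetric]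
             intro!: has_field_derivative_at_within taylor_Q_deriv dG)
  moreover have "(\<Sum>m\<le>k. G m 1 * (1 - 1) ^ m / fact m) = \<phi> x"
    by (simp add: sum.atMost_shift G_def Pm_0 zero_power del: sum.atMost_Suc)
  ultimately show ?thesis by (simp add: G_def)
qed



lemma nn_integral_scale:
  fixes h :: "'a::euclidean_space \<Rightarrow> ennreal" and c :: real
  assumes h[measurable]: "h \<in> borel_measurable borel" and c: "c \<noteq> 0"
  shows "(\<integral>\<^sup>+x. h x \<partial>lborel) = ennreal (\<bar>c\<bar> ^ DIM('a)) * (\<integral>\<^sup>+x. h (c *\<^sub>R x) \<partial>lborel)"
  by (subst lborel_affine[OF c, of 0]) (simp add: nn_integral_density nn_integral_distr nn_integral_cmult)

lemma integrable_scale_iff: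
  fixes h :: "'a::euclidean_space \<Rightarrow> real" and c :: real
  assumes h[measurable]: "h \<in> borel_measurable borel" and c: "c \<noteq> 0"
  shows "integrable lborel (\<lambda>x. h (c *\<^sub>R x)) \<longleftrightarrow> integrable lborel h"
proof -
  have "(\<integral>\<^sup>+x. ennreal (norm (h x)) \<partial>lborel) = ennreal (\<bar>c\<bar> ^ DIM('a)) * (\<integral>\<^sup>+x. ennreal (norm (h (c *\<^sub>R x))) \<partial>lborel)"
    by (rule nn_integral_scale) (use c in auto)
  moreover have "\<bar>c\<bar> ^ DIM('a) > 0" using c by simp
  ultimately show ?thesis
    unfolding integrable_iff_bounded
    by (auto simp: ennreal_mult_less_top)
qed

lemma integral_scale:
  fixes h :: "'a::euclidean_space \<Rightarrow> real" and c :: real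
  assumes h[measurable]: "h \<in> borel_measurable borel" and c: "c \<noteq> 0"
  shows "(\<integral>x. h x \<partial>lborel) = \<bar>c\<bar> ^ DIM('a) * (\<integral>x. h (c *\<^sub>R x) \<partial>lborel)"
proof (cases "integrable lborel h")
  case True
  then have i2: "integrable lborel (\<lambda>x. h (c *\<^sub>R x))" using integrable_scale_iff[OF h c] by simp
  show ?thesis
    using i2 c
    by (subst lborel_affine[OF c, of 0]) (simp add: integral_density integral_distr comp_def)
next
  case False
  then have "\<not> integrable lborel (\<lambda>x. h (c *\<^sub>R x))" using integrable_scale_iff[OF h c] by simp
  with False show ?thesis by (simp add: not_integrable_integral_eq)
qed



lemma mi_pow_cont: "continuous_on UNIV (\<lambda>x::real^'n::finite. mi_pow x \<alpha>)"
  unfolding mi_pow_def by (intro continuous_intros)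

lemma mi_pow_borel: "(\<lambda>x::real^'n::finite. mi_pow x \<alpha>) \<in> borel_measurable borel"
  by (rule borel_measurable_continuous_onI[OF mi_pow_cont])

lemma mi_pow_meas[measurable (raw)]:
  "g \<in> M \<rightarrow>\<^sub>M borel \<Longrightarrow> (\<lambda>x. mi_pow (g x :: real^'n::finite) \<alpha>) \<in> borel_measurable M"
  using measurable_compose[OF _ mi_pow_borel] by blast

lemma abs_mi_pow_le: "\<bar>mi_pow x \<alpha>\<bar> \<le> norm x ^ mi_abs \<alpha>"
proof -
  have "\<bar>mi_pow x \<alpha>\<bar> = (\<Prod>i\<in>UNIV. \<bar>x $ i\<bar> ^ \<alpha> i)" by (simp add: mi_pow_def abs_prod power_abs)
  also have "\<dots> \<le> (\<Prod>i\<in>UNIV. norm x ^ \<alpha> i)"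
    by (intro prod_mono conjI power_mono component_le_norm_cart) auto
  also have "\<dots> = norm x ^ mi_abs \<alpha>" by (simp add: mi_abs_def power_sum)
  finally show ?thesis .
qed

lemma pow_le_1_plus: "(r::real) \<ge> 0 \<Longrightarrow> m \<le> n \<Longrightarrow> r ^ m \<le> 1 + r ^ n"
proof (cases "r \<le> 1")
  case True
  assume "r \<ge> 0" then have "r ^ m \<le> 1" using True by (simp add: power_le_one)
  moreover have "r ^ n \<ge> 0" using \<open>r \<ge> 0\<close> by simp
  ultimately show ?thesis by linarith
next
  case False
  assume "m \<le> n"
  then have "r ^ m \<le> r ^ n" using False by (intro power_increasing) auto
  then show ?thesis by simp
qed

context
  fixes f :: "real^'n::{finite,linorder} \<Rightarrow> real" and k :: nat
  assumes fint: "integrable lborel (\<lambda>x. f x * (1 + norm x ^ (k + 1)))"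
begin

lemma f_borel[measurable]: "f \<in> borel_measurable borel"
proof -
  have m: "(\<lambda>x. f x * (1 + norm x ^ (k + 1))) \<in> borel_measurable borel"
    using borel_measurable_integrable[OF fint] by simp
  have "(\<lambda>x. (f x * (1 + norm x ^ (k + 1))) / (1 + norm x ^ (k + 1))) \<in> borel_measurable borel"
    using m by measurable
  moreover have "(\<lambda>x. (f x * (1 + norm x ^ (k + 1))) / (1 + norm x ^ (k + 1))) = f"
  proof
    fix x :: "real^('n::{finite,linorder})" have "1 + norm x ^ (k + 1) > 0" by (simp add: add_pos_nonneg)
    then show "(f x * (1 + norm x ^ (k + 1))) / (1 + norm x ^ (k + 1)) = f x" by simp
  qed
  ultimately show ?thesis by simp
qed

lemma mom_int: "mi_abs \<alpha> \<le> k + 1 \<Longrightarrow> integrable lborel (\<lambda>x. mi_pow x \<alpha> * f x)"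
proof (rule Bochner_Integration.integrable_bound[OF fint])
  assume a: "mi_abs \<alpha> \<le> k + 1"
  show "AE x in lborel. norm (mi_pow x \<alpha> * f x) \<le> norm (f x * (1 + norm x ^ (k + 1)))"
  proof (rule AE_I2)
    fix x :: "real^('n::{finite,linorder})"
    have h1: "\<bar>mi_pow x \<alpha>\<bar> \<le> 1 + norm x ^ (k + 1)"
      using abs_mi_pow_le[of x \<alpha>] pow_le_1_plus[OF norm_ge_zero a, of x] by linarith
    moreover have "1 + norm x ^ (k + 1) \<ge> 0" by (simp add: add_nonneg_nonneg)
    ultimately show "norm (mi_pow x \<alpha> * f x) \<le> norm (f x * (1 + norm x ^ (k + 1)))"
    proof -
      have "\<bar>mi_pow x \<alpha>\<bar> * \<bar>f x\<bar> \<le> (1 + norm x ^ (k + 1)) * \<bar>f x\<bar>"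
        by (rule mult_right_mono) (use h1 in auto)
      then show ?thesis using \<open>1 + norm x ^ (k + 1) \<ge> 0\<close> by (simp add: abs_mult mult.commute)
    qed
  qed
qed measurable

end



lemma int01_integrable: "integrable lborel (\<lambda>s::real. indicator {0..1} s * (1 - s) ^ k)"
proof -
  have "continuous_on {0..1::real} (\<lambda>s. (1 - s) ^ k)" by (intro continuous_intros)
  from borel_integrable_compact[OF compact_Icc this] show ?thesis by simp
qed

lemma pow1m_deriv: "((\<lambda>s. (1 - s) ^ (Suc k)) has_real_derivative - (real (Suc k) * (1 - s) ^ k)) (at s)"
proof -
  have "((\<lambda>s. 1 - s) has_real_derivative -1) (at s)" by (auto intro!: derivative_eq_intros)
  from DERIV_power[OF this, of "Suc k"] show ?thesis by simp
qed

lemma int01: "(\<integral>s. indicator {0..1} s * (1 - s) ^ k \<partial>lborel) = 1 / (real k + 1)"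
proof -
  have si: "set_integrable lborel {0..1::real} (\<lambda>s. (1 - s) ^ k)"
    using int01_integrable[of k] by (simp add: set_integrable_def)
  have "((\<lambda>s::real. (1 - s) ^ k) has_integral ((\<lambda>s. - ((1 - s) ^ (k + 1)) / (real k + 1)) 1 - (\<lambda>s. - ((1 - s) ^ (k + 1)) / (real k + 1)) 0)) {0..1}"
  proof (rule fundamental_theorem_of_calculus)
    fix x :: real
    have "((\<lambda>s. - ((1 - s) ^ (k + 1)) / (real k + 1)) has_real_derivative (- (- (real (Suc k) * (1 - x) ^ k))) / (real k + 1)) (at x)"
      by (intro DERIV_cdivide DERIV_minus) (simp add: pow1m_deriv[simplified])
    moreover have eq: "(- (- (real (Suc k) * (1 - x) ^ k))) / (real k + 1) = (1 - x) ^ k"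
    proof -
      have nz: "real k + 1 \<noteq> 0" by linarith
      then show ?thesis by (simp add: field_simps)
    qed
    ultimately have "((\<lambda>s. - ((1 - s) ^ (k + 1)) / (real k + 1)) has_real_derivative (1 - x) ^ k) (at x)"
      by (simp only: eq)
    then show "((\<lambda>s. - ((1 - s) ^ (k + 1)) / (real k + 1)) has_vector_derivative (1 - x) ^ k) (at x within {0..1})"
      by (simp add: has_real_derivative_iff_has_vector_derivative[symmetric] has_field_derivative_at_within)
  qed simp
  then have "integral {0..1::real} (\<lambda>s. (1 - s) ^ k) = 1 / (real k + 1)"
    by (simp add: integral_unique)
  moreover have "(LINT s : {0..1} | lborel. (1 - s) ^ k) = integral {0..1::real} (\<lambda>s. (1 - s) ^ k)"
    by (rule set_borel_integral_eq_integral(2)[OF si])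
  ultimately show ?thesis by (simp add: set_lebesgue_integral_def)
qed

context
  fixes f :: "real^('n::{finite,linorder}) \<Rightarrow> real" and k :: nat
  assumes fint: "integrable lborel (\<lambda>x. f x * (1 + norm x ^ (k + 1)))"
begin

lemmas fb[measurable] = f_borel[OF fint]

lemma scale_moment:
  assumes s: "s \<noteq> 0" and a: "mi_abs \<alpha> \<le> k + 1"
  shows "integrable lborel (\<lambda>y. mi_pow y \<alpha> * f (inverse s *\<^sub>R y))"
    and "(\<integral>y. \<bar>mi_pow y \<alpha> * f (inverse s *\<^sub>R y)\<bar> \<partial>lborel)
          = \<bar>s\<bar> ^ (DIM(real^('n::{finite,linorder})) + mi_abs \<alpha>) * (\<integral>x. \<bar>mi_pow x \<alpha> * f x\<bar> \<partial>lborel)"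
proof -
  define h where "h y = mi_pow y \<alpha> * f (inverse s *\<^sub>R y)" for y :: "real^('n::{finite,linorder})"
  have [measurable]: "h \<in> borel_measurable borel" unfolding h_def by measurable
  have hs: "h (s *\<^sub>R x) = s ^ mi_abs \<alpha> * (mi_pow x \<alpha> * f x)" for x
    using s by (simp add: h_def mi_pow_scale)
  have "integrable lborel (\<lambda>x. s ^ mi_abs \<alpha> * (mi_pow x \<alpha> * f x))"
    using mom_int[OF fint a] by simp
  then have "integrable lborel (\<lambda>x. h (s *\<^sub>R x))" by (simp add: hs)
  then show "integrable lborel (\<lambda>y. mi_pow y \<alpha> * f (inverse s *\<^sub>R y))"
    using integrable_scale_iff[of h s] s by (simp add: h_def[abs_def])
  have "(\<integral>y. \<bar>h y\<bar> \<partial>lborel) = \<bar>s\<bar> ^ DIM(real^('n::{finite,linorder})) * (\<integral>x. \<bar>h (s *\<^sub>R x)\<bar> \<partial>lborel)"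
    by (rule integral_scale) (use s in auto)
  also have "\<dots> = \<bar>s\<bar> ^ DIM(real^('n::{finite,linorder})) * (\<bar>s\<bar> ^ mi_abs \<alpha> * (\<integral>x. \<bar>mi_pow x \<alpha> * f x\<bar> \<partial>lborel))"
    by (simp add: hs abs_mult power_abs)
  finally show "(\<integral>y. \<bar>mi_pow y \<alpha> * f (inverse s *\<^sub>R y)\<bar> \<partial>lborel)
          = \<bar>s\<bar> ^ (DIM(real^('n::{finite,linorder})) + mi_abs \<alpha>) * (\<integral>x. \<bar>mi_pow x \<alpha> * f x\<bar> \<partial>lborel)"
    by (simp add: h_def power_add)
qed

end


definition G3 :: "(real^('n::{finite,linorder}) \<Rightarrow> real) \<Rightarrow> nat \<Rightarrow> ('n::{finite,linorder} \<Rightarrow> nat) \<Rightarrow> real \<Rightarrow> real^('n::{finite,linorder}) \<Rightarrow> real" where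
  "G3 f k \<alpha> s y = indicator {0..1} s * ((1 - s) ^ k / s ^ (DIM(real^('n::{finite,linorder})) + k + 1)) * (mi_pow y \<alpha> * f (inverse s *\<^sub>R y))"

definition Hf :: "(real^('n::{finite,linorder}) \<Rightarrow> real) \<Rightarrow> nat \<Rightarrow> ('n::{finite,linorder} \<Rightarrow> nat) \<Rightarrow> real^('n::{finite,linorder}) \<Rightarrow> real" where
  "Hf f k \<alpha> y = (\<integral>s. G3 f k \<alpha> s y \<partial>lborel)"

context
  fixes f :: "real^('n::{finite,linorder}) \<Rightarrow> real" and k :: nat
  assumes fint: "integrable lborel (\<lambda>x. f x * (1 + norm x ^ (k + 1)))"
begin

lemmas fb'[measurable] = f_borel[OF fint]

lemma G3_meas[measurable]: "(\<lambda>(s, y). G3 f k \<alpha> s y) \<in> borel_measurable (lborel \<Otimes>\<^sub>M lborel)"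
  unfolding G3_def by measurable

lemma G3_inner:
  assumes s: "s \<noteq> 0" and a: "mi_abs \<alpha> = k + 1"
  shows "integrable lborel (G3 f k \<alpha> s)"
    and "(\<integral>y. \<bar>G3 f k \<alpha> s y\<bar> \<partial>lborel) = indicator {0..1} s * (1 - s) ^ k * (\<integral>x. \<bar>mi_pow x \<alpha> * f x\<bar> \<partial>lborel)"
proof -
  have a': "mi_abs \<alpha> \<le> k + 1" using a by simp
  note sm = scale_moment[OF fint s a']
  show "integrable lborel (G3 f k \<alpha> s)"
    unfolding G3_def using sm(1) by (intro integrable_mult_right) 
  show "(\<integral>y. \<bar>G3 f k \<alpha> s y\<bar> \<partial>lborel) = indicator {0..1} s * (1 - s) ^ k * (\<integral>x. \<bar>mi_pow x \<alpha> * f x\<bar> \<partial>lborel)"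
  proof (cases "s \<in> {0..1}")
    case False
    then show ?thesis by (simp add: G3_def)
  next
    case True
    then have s0: "s > 0" using s by auto
    have c0: "(1 - s) ^ k / s ^ (DIM(real^('n::{finite,linorder})) + k + 1) \<ge> 0" using True by simp
    have "(\<integral>y. \<bar>G3 f k \<alpha> s y\<bar> \<partial>lborel) = (\<integral>y. ((1 - s) ^ k / s ^ (DIM(real^('n::{finite,linorder})) + k + 1)) * \<bar>mi_pow y \<alpha> * f (inverse s *\<^sub>R y)\<bar> \<partial>lborel)"
    proof -
      have "\<And>y. \<bar>G3 f k \<alpha> s y\<bar> = ((1 - s) ^ k / s ^ (DIM(real^('n::{finite,linorder})) + k + 1)) * \<bar>mi_pow y \<alpha> * f (inverse s *\<^sub>R y)\<bar>"
        using True c0 by (simp add: G3_def abs_mult)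
      then show ?thesis by simp
    qed
    also have "\<dots> = ((1 - s) ^ k / s ^ (DIM(real^('n::{finite,linorder})) + k + 1)) * (s ^ (DIM(real^('n::{finite,linorder})) + (k + 1)) * (\<integral>x. \<bar>mi_pow x \<alpha> * f x\<bar> \<partial>lborel))"
      using sm(2) s0 a by simp
    also have "\<dots> = indicator {0..1} s * (1 - s) ^ k * (\<integral>x. \<bar>mi_pow x \<alpha> * f x\<bar> \<partial>lborel)"
      using True s0 by (simp add: field_simps)
    finally show ?thesis .
  qed
qed

lemma G3_prod:
  assumes a: "mi_abs \<alpha> = k + 1"
  shows "integrable (lborel \<Otimes>\<^sub>M lborel) (\<lambda>(s, y). G3 f k \<alpha> s y)"
proof (rule lborel_pair.Fubini_integrable)
  show "(\<lambda>(s, y). G3 f k \<alpha> s y) \<in> borel_measurable (lborel \<Otimes>\<^sub>M lborel)" by measurable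
  show "AE s in lborel. integrable lborel (\<lambda>y. case (s, y) of (s, y) \<Rightarrow> G3 f k \<alpha> s y)"
    using AE_lborel_singleton[of 0] by eventually_elim (use G3_inner[OF _ a] in auto)
  have "integrable lborel (\<lambda>s. indicator {0..1} s * (1 - s) ^ k * (\<integral>x. \<bar>mi_pow x \<alpha> * f x\<bar> \<partial>lborel))"
    using int01_integrable[of k] by (intro integrable_mult_left)
  then show "integrable lborel (\<lambda>s. \<integral>y. norm (case (s, y) of (s, y) \<Rightarrow> G3 f k \<alpha> s y) \<partial>lborel)"
  proof (rule integrable_cong_AE_imp)
    show "(\<lambda>s. \<integral>y. norm (case (s, y) of (s, y) \<Rightarrow> G3 f k \<alpha> s y) \<partial>lborel) \<in> borel_measurable lborel"
      by measurable
    show "AE s in lborel. indicator {0..1} s * (1 - s) ^ k * (\<integral>x. \<bar>mi_pow x \<alpha> * f x\<bar> \<partial>lborel) =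
        (\<integral>y. norm (case (s, y) of (s, y) \<Rightarrow> G3 f k \<alpha> s y) \<partial>lborel)"
      using AE_lborel_singleton[of 0] by eventually_elim (use G3_inner[OF _ a] in auto)
  qed
qed

lemma H_integrable:
  assumes a: "mi_abs \<alpha> = k + 1"
  shows "integrable lborel (Hf f k \<alpha>)"
  unfolding Hf_def[abs_def] using lborel_pair.integrable_snd[OF G3_prod[OF a]] by simp

lemma H_bound:
  assumes a: "mi_abs \<alpha> = k + 1"
  shows "(\<integral>y. \<bar>Hf f k \<alpha> y\<bar> \<partial>lborel) \<le> (\<integral>x. \<bar>mi_pow x \<alpha> * f x\<bar> \<partial>lborel) / (real k + 1)"
proof -
  define N where "N = (\<integral>x. \<bar>mi_pow x \<alpha> * f x\<bar> \<partial>lborel)"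
  have ia: "integrable (lborel \<Otimes>\<^sub>M lborel) (\<lambda>(s, y). \<bar>G3 f k \<alpha> s y\<bar>)"
    using integrable_abs[OF G3_prod[OF a]] unfolding case_prod_unfold by simp
  have "(\<integral>y. \<bar>Hf f k \<alpha> y\<bar> \<partial>lborel) \<le> (\<integral>y. (\<integral>s. \<bar>G3 f k \<alpha> s y\<bar> \<partial>lborel) \<partial>lborel)"
  proof (rule integral_mono)
    show "integrable lborel (\<lambda>y. \<bar>Hf f k \<alpha> y\<bar>)" using H_integrable[OF a] by simp
    show "integrable lborel (\<lambda>y. \<integral>s. \<bar>G3 f k \<alpha> s y\<bar> \<partial>lborel)"
      using lborel_pair.integrable_snd[OF ia] by simp
    fix y show "\<bar>Hf f k \<alpha> y\<bar> \<le> (\<integral>s. \<bar>G3 f k \<alpha> s y\<bar> \<partial>lborel)"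
      unfolding Hf_def using integral_norm_bound[of lborel "\<lambda>s. G3 f k \<alpha> s y"] by simp
  qed
  also have "\<dots> = (\<integral>s. (\<integral>y. \<bar>G3 f k \<alpha> s y\<bar> \<partial>lborel) \<partial>lborel)"
    using lborel_pair.Fubini_integral[OF ia] by simp
  also have "\<dots> = (\<integral>s. indicator {0..1} s * (1 - s) ^ k * N \<partial>lborel)"
  proof (rule integral_cong_AE)
    show "(\<lambda>s. \<integral>y. \<bar>G3 f k \<alpha> s y\<bar> \<partial>lborel) \<in> borel_measurable lborel" by measurable
    show "(\<lambda>s. indicator {0..1} s * (1 - s) ^ k * N) \<in> borel_measurable lborel" by measurable
    show "AE s in lborel. (\<integral>y. \<bar>G3 f k \<alpha> s y\<bar> \<partial>lborel) = indicator {0..1} s * (1 - s) ^ k * N"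
      using AE_lborel_singleton[of 0] by eventually_elim (use G3_inner[OF _ a] in \<open>auto simp: N_def\<close>)
  qed
  also have "\<dots> = N / (real k + 1)" using int01[of k] by simp
  finally show ?thesis by (simp add: N_def)
qed

end


context
  fixes f :: "real^('n::{finite,linorder}) \<Rightarrow> real" and k :: nat
  assumes fint: "integrable lborel (\<lambda>x. f x * (1 + norm x ^ (k + 1)))"
begin

lemmas fb''[measurable] = f_borel[OF fint]
lemmas G3m[measurable] = G3_meas[OF fint]

lemma main_alpha:
  fixes D :: "real^('n::{finite,linorder}) \<Rightarrow> real"
  assumes a: "mi_abs \<alpha> = k + 1" and Dc: "continuous_on UNIV D" and Db: "\<And>y. \<bar>D y\<bar> \<le> B"
  shows "integrable lborel (\<lambda>x. f x * mi_pow x \<alpha> * (\<integral>s. indicator {0..1} s * (1 - s) ^ k * D (s *\<^sub>R x) \<partial>lborel))"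
    and "(\<integral>x. f x * mi_pow x \<alpha> * (\<integral>s. indicator {0..1} s * (1 - s) ^ k * D (s *\<^sub>R x) \<partial>lborel) \<partial>lborel)
         = (\<integral>y. Hf f k \<alpha> y * D y \<partial>lborel)"
proof -
  have Dm[measurable]: "D \<in> borel_measurable borel" by (rule borel_measurable_continuous_onI[OF Dc])
  have B0: "B \<ge> 0" using Db[of 0] by linarith
  have a': "mi_abs \<alpha> \<le> k + 1" using a by simp
  define N where "N = (\<integral>x. \<bar>mi_pow x \<alpha> * f x\<bar> \<partial>lborel)"
  define g1 where "g1 s x = f x * mi_pow x \<alpha> * (indicator {0..1} s * (1 - s) ^ k * D (s *\<^sub>R x))" for s x
  define G1 where "G1 s x = indicator {0..1} s * (1 - s) ^ k * \<bar>mi_pow x \<alpha> * f x\<bar>" for s :: real and x :: "real^('n::{finite,linorder})"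
  define g2 where "g2 s y = G3 f k \<alpha> s y * D y" for s y
  have [measurable]: "(\<lambda>(s, x). g1 s x) \<in> borel_measurable (lborel \<Otimes>\<^sub>M lborel)"
    unfolding g1_def by measurable
  have [measurable]: "(\<lambda>(s, x). G1 s x) \<in> borel_measurable (lborel \<Otimes>\<^sub>M lborel)"
    unfolding G1_def by measurable
  have [measurable]: "(\<lambda>(s, x). g2 s x) \<in> borel_measurable (lborel \<Otimes>\<^sub>M lborel)"
    unfolding g2_def by measurable
  have mi: "integrable lborel (\<lambda>x. \<bar>mi_pow x \<alpha> * f x\<bar>)" using mom_int[OF fint a'] by simp
  have G1i: "integrable (lborel \<Otimes>\<^sub>M lborel) (\<lambda>(s, x). G1 s x)"
  proof (rule lborel_pair.Fubini_integrable)
    show "(\<lambda>(s, x). G1 s x) \<in> borel_measurable (lborel \<Otimes>\<^sub>M lborel)" by measurable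
    show "AE s in lborel. integrable lborel (\<lambda>y. case (s, y) of (s, y) \<Rightarrow> G1 s y)"
      unfolding G1_def using mi by (auto intro!: integrable_mult_right)
    have "(\<lambda>s. \<integral>y. norm (case (s, y) of (s, y) \<Rightarrow> G1 s y) \<partial>lborel) = (\<lambda>s. indicator {0..1} s * (1 - s) ^ k * N)"
      unfolding G1_def N_def by (auto simp: fun_eq_iff abs_mult indicator_def)
    then show "integrable lborel (\<lambda>s. \<integral>y. norm (case (s, y) of (s, y) \<Rightarrow> G1 s y) \<partial>lborel)"
      using int01_integrable[of k] by (simp add: integrable_mult_left)
  qed
  have g1i: "integrable (lborel \<Otimes>\<^sub>M lborel) (\<lambda>(s, x). g1 s x)"
  proof (rule Bochner_Integration.integrable_bound)
    show "integrable (lborel \<Otimes>\<^sub>M lborel) (\<lambda>p. B * (case p of (s, x) \<Rightarrow> G1 s x))"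
      using G1i by (intro integrable_mult_right)
    show "AE p in lborel \<Otimes>\<^sub>M lborel. norm (case p of (s, x) \<Rightarrow> g1 s x) \<le> norm (B * (case p of (s, x) \<Rightarrow> G1 s x))"
    proof (rule AE_I2, clarify)
      fix s :: real and x :: "real^('n::{finite,linorder})"
      have "\<bar>g1 s x\<bar> = \<bar>D (s *\<^sub>R x)\<bar> * G1 s x"
        by (simp add: g1_def G1_def abs_mult indicator_def)
      also have "\<dots> \<le> B * G1 s x" by (rule mult_right_mono[OF Db]) (auto simp: G1_def indicator_def intro!: mult_nonneg_nonneg)
      finally show "norm (g1 s x) \<le> norm (B * G1 s x)" using B0 by (simp add: G1_def)
    qed
  qed measurable
  have g2i: "integrable (lborel \<Otimes>\<^sub>M lborel) (\<lambda>(s, x). g2 s x)"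
  proof (rule Bochner_Integration.integrable_bound)
    show "integrable (lborel \<Otimes>\<^sub>M lborel) (\<lambda>p. B * (case p of (s, y) \<Rightarrow> G3 f k \<alpha> s y))"
      using G3_prod[OF fint a] by (intro integrable_mult_right)
    show "AE p in lborel \<Otimes>\<^sub>M lborel. norm (case p of (s, x) \<Rightarrow> g2 s x) \<le> norm (B * (case p of (s, y) \<Rightarrow> G3 f k \<alpha> s y))"
    proof (rule AE_I2, clarify)
      fix s :: real and y :: "real^('n::{finite,linorder})"
      have "\<bar>g2 s y\<bar> = \<bar>D y\<bar> * \<bar>G3 f k \<alpha> s y\<bar>" by (simp add: g2_def abs_mult)
      also have "\<dots> \<le> B * \<bar>G3 f k \<alpha> s y\<bar>" by (rule mult_right_mono[OF Db]) simp
      finally show "norm (g2 s y) \<le> norm (B * G3 f k \<alpha> s y)" using B0 by (simp add: abs_mult)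
    qed
  qed measurable
  have e1: "f x * mi_pow x \<alpha> * (\<integral>s. indicator {0..1} s * (1 - s) ^ k * D (s *\<^sub>R x) \<partial>lborel) = (\<integral>s. g1 s x \<partial>lborel)" for x
    unfolding g1_def by simp
  show "integrable lborel (\<lambda>x. f x * mi_pow x \<alpha> * (\<integral>s. indicator {0..1} s * (1 - s) ^ k * D (s *\<^sub>R x) \<partial>lborel))"
    unfolding e1 using lborel_pair.integrable_snd[OF g1i] by simp
  have "(\<integral>x. f x * mi_pow x \<alpha> * (\<integral>s. indicator {0..1} s * (1 - s) ^ k * D (s *\<^sub>R x) \<partial>lborel) \<partial>lborel)
      = (\<integral>x. (\<integral>s. g1 s x \<partial>lborel) \<partial>lborel)" unfolding e1 ..
  also have "\<dots> = (\<integral>s. (\<integral>x. g1 s x \<partial>lborel) \<partial>lborel)"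
    using lborel_pair.Fubini_integral[OF g1i] by simp
  also have "\<dots> = (\<integral>s. (\<integral>y. g2 s y \<partial>lborel) \<partial>lborel)"
  proof (rule integral_cong_AE)
    show "(\<lambda>s. \<integral>x. g1 s x \<partial>lborel) \<in> borel_measurable lborel" by measurable
    show "(\<lambda>s. \<integral>x. g2 s x \<partial>lborel) \<in> borel_measurable lborel" by measurable
    show "AE s in lborel. (\<integral>x. g1 s x \<partial>lborel) = (\<integral>y. g2 s y \<partial>lborel)"
      using AE_lborel_singleton[of 0]
    proof eventually_elim
      fix s :: real assume s: "s \<noteq> 0"
      show "(\<integral>x. g1 s x \<partial>lborel) = (\<integral>y. g2 s y \<partial>lborel)"
      proof (cases "s \<in> {0..1}")
        case False then show ?thesis by (simp add: g1_def g2_def G3_def)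
      next
        case True
        then have s0: "s > 0" using s by auto
        define h where "h y = mi_pow y \<alpha> * f (inverse s *\<^sub>R y) * D y" for y :: "real^('n::{finite,linorder})"
        have [measurable]: "h \<in> borel_measurable borel" unfolding h_def by measurable
        have hs: "h (s *\<^sub>R x) = s ^ (k + 1) * (f x * mi_pow x \<alpha> * D (s *\<^sub>R x))" for x
          using s a by (simp add: h_def mi_pow_scale mult_ac)
        have "(\<integral>y. h y \<partial>lborel) = s ^ DIM(real^('n::{finite,linorder})) * (\<integral>x. h (s *\<^sub>R x) \<partial>lborel)"
          using integral_scale[of h s] s0 by simp
        also have "\<dots> = s ^ DIM(real^('n::{finite,linorder})) * (s ^ (k + 1) * (\<integral>x. f x * mi_pow x \<alpha> * D (s *\<^sub>R x) \<partial>lborel))"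
          by (simp add: hs)
        finally have hi: "(\<integral>y. h y \<partial>lborel) = s ^ (DIM(real^('n::{finite,linorder})) + k + 1) * (\<integral>x. f x * mi_pow x \<alpha> * D (s *\<^sub>R x) \<partial>lborel)"
          by (simp add: power_add)
        have "(\<integral>x. g1 s x \<partial>lborel) = (\<integral>x. (1 - s) ^ k * (f x * mi_pow x \<alpha> * D (s *\<^sub>R x)) \<partial>lborel)"
          using True by (intro Bochner_Integration.integral_cong) (auto simp: g1_def mult_ac)
        also have "\<dots> = (1 - s) ^ k * (\<integral>x. f x * mi_pow x \<alpha> * D (s *\<^sub>R x) \<partial>lborel)" by simp
        also have "\<dots> = ((1 - s) ^ k / s ^ (DIM(real^('n::{finite,linorder})) + k + 1)) * (\<integral>y. h y \<partial>lborel)"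
          using s0 by (simp add: hi)
        also have "\<dots> = (\<integral>y. ((1 - s) ^ k / s ^ (DIM(real^('n::{finite,linorder})) + k + 1)) * h y \<partial>lborel)" by simp
        also have "\<dots> = (\<integral>y. g2 s y \<partial>lborel)"
          using True by (intro Bochner_Integration.integral_cong) (auto simp: g2_def G3_def h_def mult_ac)
        finally show ?thesis .
      qed
    qed
  qed
  also have "\<dots> = (\<integral>y. (\<integral>s. g2 s y \<partial>lborel) \<partial>lborel)"
    using lborel_pair.Fubini_integral[OF g2i] by simp
  also have "\<dots> = (\<integral>y. Hf f k \<alpha> y * D y \<partial>lborel)"
    unfolding g2_def Hf_def by simp
  finally show "(\<integral>x. f x * mi_pow x \<alpha> * (\<integral>s. indicator {0..1} s * (1 - s) ^ k * D (s *\<^sub>R x) \<partial>lborel) \<partial>lborel)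
         = (\<integral>y. Hf f k \<alpha> y * D y \<partial>lborel)" .
qed

end


definition J :: "(real^('n::{finite,linorder}) \<Rightarrow> real) \<Rightarrow> nat \<Rightarrow> ('n::{finite,linorder} \<Rightarrow> nat) \<Rightarrow> real^('n::{finite,linorder}) \<Rightarrow> real" where
  "J \<phi> k \<alpha> x = (\<integral>s. indicator {0..1} s * (1 - s) ^ k * Dmi \<alpha> \<phi> (s *\<^sub>R x) \<partial>lborel)"

lemma ray_cont: "schwartz \<phi> \<Longrightarrow> continuous_on A (\<lambda>s. Dmi \<alpha> \<phi> (s *\<^sub>R x))"
  by (rule continuous_on_compose2[OF schwartz_cont]) (auto intro!: continuous_intros)

lemma J_integrand_int:
  assumes S: "schwartz \<phi>"
  shows "integrable lborel (\<lambda>s. indicator {0..1} s * (1 - s) ^ k * Dmi \<alpha> \<phi> (s *\<^sub>R x))"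
proof -
  have "continuous_on {0..1::real} (\<lambda>s. (1 - s) ^ k * Dmi \<alpha> \<phi> (s *\<^sub>R x))"
    by (intro continuous_intros ray_cont[OF S])
  from borel_integrable_compact[OF compact_Icc this] show ?thesis by (simp add: mult.assoc)
qed

lemma Pm_cont: assumes S: "schwartz \<phi>" shows "continuous_on A (\<lambda>s. Pm \<phi> m x (s *\<^sub>R x))"
  by (intro continuous_at_imp_continuous_on ballI DERIV_isCont[OF Pm_ray_deriv[OF S]])

lemma taylor_point:
  assumes S: "schwartz \<phi>"
  shows "\<phi> x = (\<Sum>m\<le>k. Pm \<phi> m x 0 / fact m) +
     (\<Sum>\<alpha>\<in>{\<alpha>. mi_abs \<alpha> = Suc k}. (fact (Suc k) / (mi_fact \<alpha> * fact k)) * (mi_pow x \<alpha> * J \<phi> k \<alpha> x))"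
proof -
  define g where "g s = Pm \<phi> (Suc k) x (s *\<^sub>R x) * (1 - s) ^ k / fact k" for s :: real
  have T: "integral {0..1} g = \<phi> x - (\<Sum>m\<le>k. Pm \<phi> m x 0 / fact m)"
    unfolding g_def by (rule integral_unique[OF taylor_integral[OF S]])
  have gc: "continuous_on {0..1} g" unfolding g_def by (intro continuous_intros Pm_cont[OF S]) auto
  have si: "set_integrable lborel {0..1::real} g"
    using borel_integrable_compact[OF compact_Icc gc] by (simp add: set_integrable_def)
  have "integral {0..1} g = (\<integral>s. indicator {0..1} s * g s \<partial>lborel)"
    using set_borel_integral_eq_integral(2)[OF si] by (simp add: set_lebesgue_integral_def)
  also have "\<dots> = (\<integral>s. (\<Sum>\<alpha>\<in>{\<alpha>. mi_abs \<alpha> = Suc k}. ((fact (Suc k) / mi_fact \<alpha>) * mi_pow x \<alpha> / fact k) *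
         (indicator {0..1} s * (1 - s) ^ k * Dmi \<alpha> \<phi> (s *\<^sub>R x))) \<partial>lborel)"
    by (intro Bochner_Integration.integral_cong refl)
       (simp add: g_def Pm_def sum_distrib_left sum_distrib_right sum_divide_distrib mult_ac)
  also have "\<dots> = (\<Sum>\<alpha>\<in>{\<alpha>. mi_abs \<alpha> = Suc k}. ((fact (Suc k) / mi_fact \<alpha>) * mi_pow x \<alpha> / fact k) * J \<phi> k \<alpha> x)"
    unfolding J_def
    by (subst Bochner_Integration.integral_sum) (auto intro!: integrable_mult_right J_integrand_int[OF S])
  also have "\<dots> = (\<Sum>\<alpha>\<in>{\<alpha>. mi_abs \<alpha> = Suc k}. (fact (Suc k) / (mi_fact \<alpha> * fact k)) * (mi_pow x \<alpha> * J \<phi> k \<alpha> x))"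
    by (intro sum.cong refl) (simp add: field_simps)
  finally show ?thesis using T by simp
qed



lemma Dmi_bounded:
  assumes S: "schwartz \<phi>"
  shows "\<exists>B. \<forall>y. \<bar>Dmi \<alpha> \<phi> y\<bar> \<le> B"
proof -
  have "bounded (range (\<lambda>x. (1 + norm x) ^ 0 * Dmi \<alpha> \<phi> x))"
    using S unfolding schwartz_def by blast
  then obtain B where "\<forall>z\<in>range (Dmi \<alpha> \<phi>). norm z \<le> B" by (auto simp: bounded_iff)
  then show ?thesis by auto
qed

lemma sum_group_abs:
  fixes g :: "('n::finite \<Rightarrow> nat) \<Rightarrow> real"
  shows "(\<Sum>\<beta>\<in>{\<beta>. mi_abs \<beta> \<le> k}. g \<beta>) = (\<Sum>m\<le>k. \<Sum>\<beta>\<in>{\<beta>. mi_abs \<beta> = m}. g \<beta>)"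
proof -
  have "(\<Sum>m\<le>k. \<Sum>\<beta>\<in>{\<beta>. \<beta> \<in> {\<beta>. mi_abs \<beta> \<le> k} \<and> mi_abs \<beta> = m}. g \<beta>) = (\<Sum>\<beta>\<in>{\<beta>. mi_abs \<beta> \<le> k}. g \<beta>)"
    by (rule sum.group) (auto simp: finite_mi_le)
  moreover have "(\<Sum>m\<le>k. \<Sum>\<beta>\<in>{\<beta>. \<beta> \<in> {\<beta>. mi_abs \<beta> \<le> k} \<and> mi_abs \<beta> = m}. g \<beta>) = (\<Sum>m\<le>k. \<Sum>\<beta>\<in>{\<beta>. mi_abs \<beta> = m}. g \<beta>)"
    by (intro sum.cong refl) auto
  ultimately show ?thesis by simp
qed

theorem mainTheorem1:
  fixes f :: "real^('n::{finite,linorder}) \<Rightarrow> real" and k :: nat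
  assumes "integrable lborel (\<lambda>x. f x * (1 + norm x ^ (k + 1)))"
  shows "\<exists>F :: ('n::{finite,linorder} \<Rightarrow> nat) \<Rightarrow> real^('n::{finite,linorder}) \<Rightarrow> real.
     (\<forall>\<alpha>. mi_abs \<alpha> = k + 1 \<longrightarrow> integrable lborel (F \<alpha>)) \<and>
     (\<forall>\<phi>. schwartz \<phi> \<longrightarrow>
        regular_distr f \<phi> =
          (\<Sum>\<alpha>\<in>{\<alpha>. mi_abs \<alpha> \<le> k}.
             ((-1) ^ mi_abs \<alpha> / mi_fact \<alpha>) * integral\<^sup>L lborel (\<lambda>x. mi_pow x \<alpha> * f x)
             * distr_D \<alpha> dirac \<phi>)
          + (\<Sum>\<alpha>\<in>{\<alpha>. mi_abs \<alpha> = k + 1}. distr_D \<alpha> (regular_distr (F \<alpha>)) \<phi>)) \<and>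
     (\<forall>\<alpha>. mi_abs \<alpha> = k + 1 \<longrightarrow>
        integral\<^sup>L lborel (\<lambda>x. \<bar>F \<alpha> x\<bar>)
          \<le> integral\<^sup>L lborel (\<lambda>x. \<bar>mi_pow x \<alpha> * f x\<bar>) / mi_fact \<alpha>)"
proof -
  note fint = assms
  define c where "c \<alpha> = fact (Suc k) / (mi_fact \<alpha> * fact k)" for \<alpha> :: "'n \<Rightarrow> nat"
  have c_eq: "c \<alpha> = (real k + 1) / mi_fact \<alpha>" for \<alpha>
  proof -
    have "(fact k :: real) > 0" "mi_fact \<alpha> > 0" using mi_fact_pos[of \<alpha>] by auto
    then show ?thesis unfolding c_def by (simp add: field_simps)
  qed
  define F where "F \<alpha> y = (-1) ^ (k + 1) * c \<alpha> * Hf f k \<alpha> y" for \<alpha> y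
  show ?thesis
  proof (intro exI[of _ F] conjI allI impI)
    fix \<alpha> :: "'n \<Rightarrow> nat" assume a: "mi_abs \<alpha> = k + 1"
    show "integrable lborel (F \<alpha>)"
      unfolding F_def[abs_def] using H_integrable[OF fint a] by (intro integrable_mult_right)
  next
    fix \<alpha> :: "'n \<Rightarrow> nat" assume a: "mi_abs \<alpha> = k + 1"
    have c0: "c \<alpha> \<ge> 0" unfolding c_eq using mi_fact_pos[of \<alpha>] by simp
    have "(\<integral>x. \<bar>F \<alpha> x\<bar> \<partial>lborel) = c \<alpha> * (\<integral>x. \<bar>Hf f k \<alpha> x\<bar> \<partial>lborel)"
      unfolding F_def using c0 by (simp add: abs_mult)
    also have "\<dots> \<le> c \<alpha> * ((\<integral>x. \<bar>mi_pow x \<alpha> * f x\<bar> \<partial>lborel) / (real k + 1))"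
      by (rule mult_left_mono[OF H_bound[OF fint a] c0])
    also have "\<dots> = (\<integral>x. \<bar>mi_pow x \<alpha> * f x\<bar> \<partial>lborel) / mi_fact \<alpha>"
    proof -
      have "real k + 1 > 0" "mi_fact \<alpha> > 0" using mi_fact_pos[of \<alpha>] by auto
      then show ?thesis unfolding c_eq by simp
    qed
    finally show "(\<integral>x. \<bar>F \<alpha> x\<bar> \<partial>lborel) \<le> (\<integral>x. \<bar>mi_pow x \<alpha> * f x\<bar> \<partial>lborel) / mi_fact \<alpha>" .
  next
    fix \<phi> :: "real^('n::{finite,linorder}) \<Rightarrow> real" assume S: "schwartz \<phi>"
    let ?A = "{\<alpha>::'n\<Rightarrow>nat. mi_abs \<alpha> = Suc k}"
    have pw: "f x * \<phi> x = (\<Sum>m\<le>k. f x * (Pm \<phi> m x 0 / fact m)) +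
        (\<Sum>\<alpha>\<in>?A. c \<alpha> * (f x * mi_pow x \<alpha> * J \<phi> k \<alpha> x))" for x
      by (subst taylor_point[OF S, of x k]) (simp add: algebra_simps sum_distrib_left c_def)
    have Pm_exp: "f x * (Pm \<phi> m x 0 / fact m) = (\<Sum>\<beta>\<in>{\<beta>. mi_abs \<beta> = m}. (Dmi \<beta> \<phi> 0 / mi_fact \<beta>) * (mi_pow x \<beta> * f x))" for x m
      by (simp add: Pm_def sum_distrib_left sum_divide_distrib field_simps)
    have int1: "integrable lborel (\<lambda>x. f x * (Pm \<phi> m x 0 / fact m))" if "m \<le> k" for m
      unfolding Pm_exp using that
      by (intro Bochner_Integration.integrable_sum integrable_mult_right mom_int[OF fint]) auto
    have int1': "\<integral>x. f x * (Pm \<phi> m x 0 / fact m) \<partial>lborel = (\<Sum>\<beta>\<in>{\<beta>. mi_abs \<beta> = m}. (Dmi \<beta> \<phi> 0 / mi_fact \<beta>) * (\<integral>x. mi_pow x \<beta> * f x \<partial>lborel))"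
      if "m \<le> k" for m
      unfolding Pm_exp using that
      by (subst Bochner_Integration.integral_sum) (auto intro!: integrable_mult_right mom_int[OF fint])
    have ma: "integrable lborel (\<lambda>x. f x * mi_pow x \<alpha> * J \<phi> k \<alpha> x) \<and>
        (\<integral>x. f x * mi_pow x \<alpha> * J \<phi> k \<alpha> x \<partial>lborel) = (\<integral>y. Hf f k \<alpha> y * Dmi \<alpha> \<phi> y \<partial>lborel)"
      if a: "\<alpha> \<in> ?A" for \<alpha>
    proof -
      obtain B where B: "\<forall>y. \<bar>Dmi \<alpha> \<phi> y\<bar> \<le> B" using Dmi_bounded[OF S] by blast
      have a': "mi_abs \<alpha> = k + 1" using a by simp
      show ?thesis unfolding J_def
        using main_alpha[OF fint a' schwartz_cont[OF S], where B=B] B by blast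
    qed
    have "regular_distr f \<phi> = (\<integral>x. f x * \<phi> x \<partial>lborel)" by (simp add: regular_distr_def)
    also have "\<dots> = (\<integral>x. (\<Sum>m\<le>k. f x * (Pm \<phi> m x 0 / fact m)) + (\<Sum>\<alpha>\<in>?A. c \<alpha> * (f x * mi_pow x \<alpha> * J \<phi> k \<alpha> x)) \<partial>lborel)"
      by (simp only: pw)
    also have "\<dots> = (\<Sum>m\<le>k. \<integral>x. f x * (Pm \<phi> m x 0 / fact m) \<partial>lborel) + (\<Sum>\<alpha>\<in>?A. c \<alpha> * (\<integral>x. f x * mi_pow x \<alpha> * J \<phi> k \<alpha> x \<partial>lborel))"
    proof -
      have i1: "integrable lborel (\<lambda>x. \<Sum>m\<le>k. f x * (Pm \<phi> m x 0 / fact m))"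
        by (intro Bochner_Integration.integrable_sum int1) auto
      have i2: "integrable lborel (\<lambda>x. \<Sum>\<alpha>\<in>?A. c \<alpha> * (f x * mi_pow x \<alpha> * J \<phi> k \<alpha> x))"
        using ma by (intro Bochner_Integration.integrable_sum integrable_mult_right) auto
      show ?thesis
        using i1 i2 int1 ma
        by (simp add: Bochner_Integration.integral_add Bochner_Integration.integral_sum)
    qed
    also have "\<dots> = (\<Sum>m\<le>k. \<Sum>\<beta>\<in>{\<beta>. mi_abs \<beta> = m}. (Dmi \<beta> \<phi> 0 / mi_fact \<beta>) * (\<integral>x. mi_pow x \<beta> * f x \<partial>lborel))
        + (\<Sum>\<alpha>\<in>?A. c \<alpha> * (\<integral>y. Hf f k \<alpha> y * Dmi \<alpha> \<phi> y \<partial>lborel))"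
      using int1' ma by simp
    also have "\<dots> = (\<Sum>\<alpha>\<in>{\<alpha>. mi_abs \<alpha> \<le> k}.
             ((-1) ^ mi_abs \<alpha> / mi_fact \<alpha>) * integral\<^sup>L lborel (\<lambda>x. mi_pow x \<alpha> * f x)
             * distr_D \<alpha> dirac \<phi>)
          + (\<Sum>\<alpha>\<in>{\<alpha>. mi_abs \<alpha> = k + 1}. distr_D \<alpha> (regular_distr (F \<alpha>)) \<phi>)"
    proof -
      have "(\<Sum>\<alpha>\<in>{\<alpha>. mi_abs \<alpha> \<le> k}.
             ((-1) ^ mi_abs \<alpha> / mi_fact \<alpha>) * integral\<^sup>L lborel (\<lambda>x. mi_pow x \<alpha> * f x)
             * distr_D \<alpha> dirac \<phi>) = (\<Sum>\<alpha>\<in>{\<alpha>. mi_abs \<alpha> \<le> k}. (Dmi \<alpha> \<phi> 0 / mi_fact \<alpha>) * (\<integral>x. mi_pow x \<alpha> * f x \<partial>lborel))"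
        by (intro sum.cong refl) (simp add: distr_D_def dirac_def field_simps)
      also have "\<dots> = (\<Sum>m\<le>k. \<Sum>\<beta>\<in>{\<beta>. mi_abs \<beta> = m}. (Dmi \<beta> \<phi> 0 / mi_fact \<beta>) * (\<integral>x. mi_pow x \<beta> * f x \<partial>lborel))"
        by (rule sum_group_abs)
      finally have s1: "(\<Sum>\<alpha>\<in>{\<alpha>. mi_abs \<alpha> \<le> k}.
             ((-1) ^ mi_abs \<alpha> / mi_fact \<alpha>) * integral\<^sup>L lborel (\<lambda>x. mi_pow x \<alpha> * f x)
             * distr_D \<alpha> dirac \<phi>) = (\<Sum>m\<le>k. \<Sum>\<beta>\<in>{\<beta>. mi_abs \<beta> = m}. (Dmi \<beta> \<phi> 0 / mi_fact \<beta>) * (\<integral>x. mi_pow x \<beta> * f x \<partial>lborel))" .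
      have s2: "(\<Sum>\<alpha>\<in>{\<alpha>. mi_abs \<alpha> = k + 1}. distr_D \<alpha> (regular_distr (F \<alpha>)) \<phi>)
          = (\<Sum>\<alpha>\<in>?A. c \<alpha> * (\<integral>y. Hf f k \<alpha> y * Dmi \<alpha> \<phi> y \<partial>lborel))"
      proof (intro sum.cong)
        show "{\<alpha>. mi_abs \<alpha> = k + 1} = ?A" by simp
        fix \<alpha> assume "\<alpha> \<in> ?A"
        then have a: "mi_abs \<alpha> = k + 1" by simp
        have "distr_D \<alpha> (regular_distr (F \<alpha>)) \<phi> = (-1) ^ (k + 1) * (\<integral>y. (-1) ^ (k + 1) * c \<alpha> * (Hf f k \<alpha> y * Dmi \<alpha> \<phi> y) \<partial>lborel)"
          by (simp add: distr_D_def regular_distr_def F_def a mult_ac)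
        also have "\<dots> = c \<alpha> * (\<integral>y. Hf f k \<alpha> y * Dmi \<alpha> \<phi> y \<partial>lborel)"
          by (simp only: integral_mult_right_zero) (simp add: mult.assoc[symmetric])
        finally show "distr_D \<alpha> (regular_distr (F \<alpha>)) \<phi> = c \<alpha> * (\<integral>y. Hf f k \<alpha> y * Dmi \<alpha> \<phi> y \<partial>lborel)" .
      qed
      show ?thesis unfolding s1 s2 ..
    qed
    finally show "regular_distr f \<phi> = (\<Sum>\<alpha>\<in>{\<alpha>. mi_abs \<alpha> \<le> k}.
             ((-1) ^ mi_abs \<alpha> / mi_fact \<alpha>) * integral\<^sup>L lborel (\<lambda>x. mi_pow x \<alpha> * f x)
             * distr_D \<alpha> dirac \<phi>)
          + (\<Sum>\<alpha>\<in>{\<alpha>. mi_abs \<alpha> = k + 1}. distr_D \<alpha> (regular_distr (F \<alpha>)) \<phi>)" .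
  qed
qed


end
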